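(* Let $n\ge1$ and let $\phi_n$ be the basic limit function of $S_n$. Then $$0<\phi_n(-2n+2)<\phi_n(-2n+3)<\cdots<\phi_n(-1)<\phi_n(0),$$ and moreover $$\phi_n(-n)=\frac{n-1}{2n-1}\,\phi_n(0).$$
   Context: For an integer $n\ge1$, the subdivision scheme $S_n$ acts on real sequences $\mathbf f^k=(f^k_i)_{i\in\mathbb Z}$ (the value $f^k_i$ being associated with the dyadic point $2^{-k}i$) by the refinement rules $$f^{k+1}_{2i}=\frac1{2n-1}\sum_{j=-n+1}^{n-1}f^k_{i+j},\qquad f^{k+1}_{2i+1}=\frac1{2n}\sum_{j=-n+1}^{n}f^k_{i+j}.$$ This scheme is convergent: for every bounded initial sequence $\mathbf f^0$ there is a continuous $F:\mathbb R\to\mathbb R$ with $\lim_{k\to\infty}\sup_i|f^k_i-F(2^{-k}i)|=0$. The basic limit function $\phi_n$ is the limit function generated from the initial data $\delta$, where $\delta_0=1$ and $\delta_i=0$ for $i\neq0$. *)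

theory Defs
  imports "HOL-Analysis.Analysis"
begin

definition refine :: "nat \<Rightarrow> (int \<Rightarrow> real) \<Rightarrow> (int \<Rightarrow> real)" where
  "refine n f i =
     (if even i
      then (1 / (2 * real n - 1)) * (\<Sum>j = - int n + 1 .. int n - 1. f (i div 2 + j))
      else (1 / (2 * real n)) * (\<Sum>j = - int n + 1 .. int n. f (i div 2 + j)))"

definition subdiv :: "nat \<Rightarrow> nat \<Rightarrow> (int \<Rightarrow> real) \<Rightarrow> (int \<Rightarrow> real)" where
  "subdiv n k f = (refine n ^^ k) f"

definition delta :: "int \<Rightarrow> real" where
  "delta i = (if i = 0 then 1 else 0)"

definition is_limit_function :: "nat \<Rightarrow> (int \<Rightarrow> real) \<Rightarrow> (real \<Rightarrow> real) \<Rightarrow> bool" where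
  "is_limit_function n f F \<longleftrightarrow>
     continuous_on UNIV F \<and>
     (\<forall>e>0. \<exists>K. \<forall>k\<ge>K. \<forall>i. \<bar>subdiv n k f i - F (real_of_int i / 2 ^ k)\<bar> \<le> e)"

definition is_basic_limit_function :: "nat \<Rightarrow> (real \<Rightarrow> real) \<Rightarrow> bool" where
  "is_basic_limit_function n phi \<longleftrightarrow> is_limit_function n delta phi"

end

theory Submission imports Defs "HOL-Analysis.Analysis" begin


lemma refine_lin:
  "refine n (\<lambda>i. ca * (\<Sum>t\<in>TA. G (i + sa t)) + cb * (\<Sum>t\<in>TB. G (i + sb t))) i
   = ca * (\<Sum>t\<in>TA. refine n G (i + 2* sa t)) + cb * (\<Sum>t\<in>TB. refine n G (i + 2* sb t))"
proof -
  have ev: "even (i + 2 * s) = even i" for s :: int by simp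
  have dv: "(i + 2 * s) div 2 = i div 2 + s" for s :: int by simp
  show ?thesis
    unfolding refine_def ev dv
    by (simp add: sum_distrib_left sum.distrib algebra_simps sum.swap[of _ TA] sum.swap[of _ TB])
qed

lemma refine_pow_lin:
  "(refine n ^^ k) (\<lambda>i. ca * (\<Sum>t\<in>TA. G (i + sa t)) + cb * (\<Sum>t\<in>TB. G (i + sb t))) i
   = ca * (\<Sum>t\<in>TA. (refine n ^^ k) G (i + 2^k* sa t)) + cb * (\<Sum>t\<in>TB. (refine n ^^ k) G (i + 2^k* sb t))"
proof (induction k arbitrary: i)
  case 0 then show ?case by simp
next
  case (Suc k)
  have e: "(refine n ^^ k) (\<lambda>i. ca * (\<Sum>t\<in>TA. G (i + sa t)) + cb * (\<Sum>t\<in>TB. G (i + sb t)))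
     = (\<lambda>i. ca * (\<Sum>t\<in>TA. (refine n ^^ k) G (i + 2^k* sa t)) + cb * (\<Sum>t\<in>TB. (refine n ^^ k) G (i + 2^k* sb t)))"
    using Suc by auto
  show ?case
    by (simp add: e refine_lin[where G="(refine n ^^ k) G" and sa="\<lambda>t. 2^k * sa t" and sb="\<lambda>t. 2^k * sb t"] mult.assoc)
qed

lemma refine_delta:
  "refine n delta = (\<lambda>i. (1 / (2 * real n - 1)) * (\<Sum>t\<in>{- int n + 1 .. int n - 1}. delta (i + 2*t))
      + (1 / (2 * real n)) * (\<Sum>t\<in>{- int n + 1 .. int n}. delta (i + (2*t - 1))))"
proof
  fix i :: int
  show "refine n delta i = (1 / (2 * real n - 1)) * (\<Sum>t\<in>{- int n + 1 .. int n - 1}. delta (i + 2*t))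
      + (1 / (2 * real n)) * (\<Sum>t\<in>{- int n + 1 .. int n}. delta (i + (2*t - 1)))"
  proof (cases "even i")
    case True
    then obtain q where q: "i = 2*q" by blast
    have a: "(\<Sum>t\<in>{- int n + 1 .. int n}. delta (i + (2*t - 1))) = 0"
      by (rule sum.neutral) (auto simp: delta_def q; presburger)
    have b: "(\<Sum>t\<in>{- int n + 1 .. int n - 1}. delta (i + 2*t)) = (\<Sum>t\<in>{- int n + 1 .. int n - 1}. delta (i div 2 + t))"
      by (rule sum.cong) (auto simp: delta_def q)
    show ?thesis using True unfolding refine_def a b by simp
  next
    case False
    then obtain q where q: "i = 2*q+1" by (metis oddE)
    have a: "(\<Sum>t\<in>{- int n + 1 .. int n - 1}. delta (i + 2*t)) = 0"
      by (rule sum.neutral) (auto simp: delta_def q; presburger)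
    have b: "(\<Sum>t\<in>{- int n + 1 .. int n}. delta (i + (2*t - 1))) = (\<Sum>t\<in>{- int n + 1 .. int n}. delta (i div 2 + t))"
      by (rule sum.cong) (auto simp: delta_def q)
    show ?thesis using False unfolding refine_def a b by simp
  qed
qed


definition Aop :: "nat \<Rightarrow> (int \<Rightarrow> real) \<Rightarrow> int \<Rightarrow> real" where
 "Aop n w j = (1/(2*real n - 1)) * (\<Sum>t\<in>{- int n + 1 .. int n - 1}. w (2*j + 2*t))
     + (1/(2*real n)) * (\<Sum>t\<in>{- int n + 1 .. int n}. w (2*j + 2*t - 1))"

definition W :: "nat \<Rightarrow> nat \<Rightarrow> int \<Rightarrow> real" where
 "W n k j = subdiv n k delta (2^k * j)"

lemma W_0: "W n 0 j = delta j"
  by (simp add: W_def subdiv_def)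

lemma W_Suc: "W n (Suc k) j = Aop n (W n k) j"
proof -
  have "subdiv n (Suc k) delta = (refine n ^^ k) (refine n delta)"
    by (simp only: subdiv_def funpow_Suc_right comp_def)
  then have "W n (Suc k) j = (refine n ^^ k) (refine n delta) (2^Suc k * j)"
    by (simp add: W_def)
  also have "\<dots> = Aop n (W n k) j"
    unfolding refine_delta refine_pow_lin[where sa = "\<lambda>t. 2*t" and sb = "\<lambda>t. 2*t-1"] Aop_def W_def subdiv_def
    by (simp add: algebra_simps)
  finally show ?thesis .
qed

lemma Aop_nonneg: "n \<ge> 1 \<Longrightarrow> (\<And>i. w i \<ge> 0) \<Longrightarrow> Aop n w j \<ge> 0"
  unfolding Aop_def by (intro add_nonneg_nonneg mult_nonneg_nonneg sum_nonneg) auto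

lemma Aop_supp:
  assumes "n \<ge> 1" "\<And>i. \<bar>i\<bar> > 2*int n - 2 \<Longrightarrow> w i = 0" "\<bar>j\<bar> > 2*int n - 2"
  shows "Aop n w j = 0"
proof -
  have a: "(\<Sum>t\<in>{- int n + 1 .. int n - 1}. w (2*j + 2*t)) = 0"
    by (rule sum.neutral) (use assms in auto)
  have b: "(\<Sum>t\<in>{- int n + 1 .. int n}. w (2*j + 2*t - 1)) = 0"
    by (rule sum.neutral) (use assms in auto)
  show ?thesis unfolding Aop_def a b by simp
qed

lemma Aop_sym:
  assumes "\<And>i. w (-i) = w i"
  shows "Aop n w (-j) = Aop n w j"
proof -
  have s: "w (x - y) = w (y - x)" for x y using assms[of "y - x"] by simp
  have a: "(\<Sum>t\<in>{- int n + 1 .. int n - 1}. w (2*(-j) + 2*t)) = (\<Sum>t\<in>{- int n + 1 .. int n - 1}. w (2*j + 2*t))"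
    by (rule sum.reindex_bij_witness[where i = "\<lambda>t. -t" and j = "\<lambda>t. -t"]) (auto simp: algebra_simps intro: s)
  have b: "(\<Sum>t\<in>{- int n + 1 .. int n}. w (2*(-j) + 2*t - 1)) = (\<Sum>t\<in>{- int n + 1 .. int n}. w (2*j + 2*t - 1))"
    by (rule sum.reindex_bij_witness[where i = "\<lambda>t. 1-t" and j = "\<lambda>t. 1-t"]) (auto simp: algebra_simps intro: s)
  show ?thesis unfolding Aop_def a b ..
qed


lemma has_sum_sumI:
  fixes f :: "'b \<Rightarrow> 'a \<Rightarrow> real"
  assumes "finite T" "\<And>t. t \<in> T \<Longrightarrow> (f t has_sum a t) A"
  shows "((\<lambda>x. \<Sum>t\<in>T. f t x) has_sum (\<Sum>t\<in>T. a t)) A"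
  using assms
proof (induction T rule: finite_induct)
  case empty then show ?case by simp
next
  case (insert t T)
  then show ?case by (simp add: has_sum_add)
qed

lemma range_even: "range (\<lambda>j::int. 2*j + 2*t) = {i. even i}"
proof (auto)
  fix i :: int assume "even i"
  then show "i \<in> range (\<lambda>j. 2*j + 2*t)"
    by (intro range_eqI[of _ _ "i div 2 - t"]) auto
qed

lemma range_odd: "range (\<lambda>j::int. 2*j + 2*t - 1) = {i. odd i}"
proof (auto)
  fix i :: int assume "odd i"
  then show "i \<in> range (\<lambda>j. 2*j + 2*t - 1)"
    by (intro range_eqI[of _ _ "(i+1) div 2 - t"]) (auto elim!: oddE)
qed

lemma Aop_sum:
  assumes n: "n \<ge> 1" and supp: "\<And>i. \<bar>i\<bar> > 2*int n - 2 \<Longrightarrow> w i = 0"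
    and s1: "(\<Sum>i\<in>{-(2*int n - 2)..2*int n - 2}. w i) = 1"
  shows "(\<Sum>i\<in>{-(2*int n - 2)..2*int n - 2}. Aop n w i) = 1"
proof -
  define J where "J = {-(2*int n - 2)..2*int n - 2}"
  define E where "E = {i::int. even i}"
  define Od where "Od = {i::int. odd i}"
  define SE where "SE = (\<Sum>i\<in>J\<inter>E. w i)"
  define SO where "SO = (\<Sum>i\<in>J\<inter>Od. w i)"
  have fJ: "finite J" by (simp add: J_def)
  have hE: "(w has_sum SE) E"
    by (rule has_sum_finite_neutralI[of "J\<inter>E"]) (use fJ supp in \<open>auto simp: SE_def J_def\<close>)
  have hO: "(w has_sum SO) Od"
    by (rule has_sum_finite_neutralI[of "J\<inter>Od"]) (use fJ supp in \<open>auto simp: SO_def J_def\<close>)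
  have "(\<Sum>i\<in>J. w i) = SE + SO"
  proof -
    have "J - E = J \<inter> Od" by (auto simp: E_def Od_def)
    then show ?thesis unfolding SE_def SO_def using sum.Int_Diff[OF fJ, of w E] by simp
  qed
  then have SEO: "SE + SO = 1" using s1 J_def by simp
  have te: "((\<lambda>j. w (2*j + 2*t)) has_sum SE) UNIV" for t
  proof -
    have "inj (\<lambda>j::int. 2*j + 2*t)" by (auto simp: inj_def)
    from has_sum_reindex[OF this, of w SE] hE show ?thesis
      by (simp add: range_even E_def comp_def)
  qed
  have to: "((\<lambda>j. w (2*j + 2*t - 1)) has_sum SO) UNIV" for t
  proof -
    have "inj (\<lambda>j::int. 2*j + 2*t - 1)" by (auto simp: inj_def)
    from has_sum_reindex[OF this, of w SO] hO show ?thesis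
      by (simp add: range_odd Od_def comp_def)
  qed
  have h1: "((\<lambda>j. \<Sum>t\<in>{- int n + 1 .. int n - 1}. w (2*j + 2*t)) has_sum (\<Sum>t\<in>{- int n + 1 .. int n - 1}. SE)) UNIV"
    by (rule has_sum_sumI) (auto intro: te)
  have h2: "((\<lambda>j. \<Sum>t\<in>{- int n + 1 .. int n}. w (2*j + 2*t - 1)) has_sum (\<Sum>t\<in>{- int n + 1 .. int n}. SO)) UNIV"
    by (rule has_sum_sumI) (auto intro: to)
  have c1: "(\<Sum>t\<in>{- int n + 1 .. int n - 1}. SE) = (2*real n - 1) * SE"
    using n by (simp add: of_nat_diff)
  have c2: "(\<Sum>t\<in>{- int n + 1 .. int n}. SO) = (2*real n) * SO"
    using n by simp
  have "(Aop n w has_sum ((1/(2*real n - 1)) * ((2*real n - 1) * SE) + (1/(2*real n)) * ((2*real n) * SO))) UNIV"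
    unfolding Aop_def[abs_def] using has_sum_add[OF has_sum_cmult_right[OF h1] has_sum_cmult_right[OF h2]]
    unfolding c1 c2 .
  moreover have "(1/(2*real n - 1)) * ((2*real n - 1) * SE) + (1/(2*real n)) * ((2*real n) * SO) = 1"
    using n SEO by simp
  ultimately have hA: "(Aop n w has_sum 1) UNIV" by simp
  have "(Aop n w has_sum (\<Sum>i\<in>J. Aop n w i)) UNIV"
    by (rule has_sum_finite_neutralI[of J]) (use fJ n supp in \<open>auto simp: J_def intro!: Aop_supp\<close>)
  with hA show ?thesis using has_sum_unique J_def by blast
qed


lemma tele_aux: fixes a :: int shows "(\<Sum>t\<in>{a..a + int m - 1}. (g (t+1) - g t)) = g (a + int m) - (g a :: real)"
proof (induction m)
  case 0 then show ?case by simp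
next
  case (Suc m)
  have e: "{a..a + int (Suc m) - 1} = insert (a + int m) {a..a + int m - 1}" by auto
  show ?case unfolding e using Suc by (simp add: algebra_simps)
qed

lemma tele:
  fixes a b :: int
  assumes "a \<le> b + 1"
  shows "(\<Sum>t\<in>{a..b}. g (t+1)) - (\<Sum>t\<in>{a..b}. g t) = g (b + 1) - (g a :: real)"
proof -
  have "b = a + int (nat (b - a + 1)) - 1" using assms by simp
  then show ?thesis using tele_aux[where a=a and m="nat (b - a + 1)" and g=g] assms by (simp add: sum_subtractf)
qed

lemma sum_shift_int: fixes a b k :: int shows "(\<Sum>j\<in>{a..b}. g (j + k)) = (\<Sum>t\<in>{a+k..b+k}. (g t :: real))"
  by (rule sum.reindex_bij_witness[where i="\<lambda>t. t - k" and j="\<lambda>j. j + k"]) auto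

lemma sum_split_int:
  fixes a b m :: int
  assumes "a - 1 \<le> m" "m \<le> b"
  shows "(\<Sum>t\<in>{a..b}. g t) = (\<Sum>t\<in>{a..m}. g t) + (\<Sum>t\<in>{m+1..b}. (g t :: real))"
proof -
  have "{a..b} = {a..m} \<union> {m+1..b}" using assms by auto
  then show ?thesis by (simp add: sum.union_disjoint)
qed

lemma discrete_ivt:
  fixes a b :: int
  assumes "P a" "\<not> P b" "a \<le> b"
  shows "\<exists>j. a \<le> j \<and> j < b \<and> P j \<and> \<not> P (j+1)"
proof -
  have "\<forall>b. a + int m = b \<longrightarrow> \<not> P b \<longrightarrow> (\<exists>j. a \<le> j \<and> j < b \<and> P j \<and> \<not> P (j+1))" for m
  proof (induction m)
    case 0 then show ?case using assms(1) by auto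
  next
    case (Suc m)
    show ?case
    proof (intro allI impI)
      fix b assume b: "a + int (Suc m) = b" "\<not> P b"
      show "\<exists>j. a \<le> j \<and> j < b \<and> P j \<and> \<not> P (j+1)"
      proof (cases "P (b - 1)")
        case True then show ?thesis using b by (intro exI[of _ "b-1"]) auto
      next
        case False
        from Suc.IH[rule_format, of "b-1"] False b obtain j where "a \<le> j \<and> j < b - 1 \<and> P j \<and> \<not> P (j+1)" by auto
        then show ?thesis by (intro exI[of _ j]) auto
      qed
    qed
  qed
  from this[of "nat (b - a)"] assms show ?thesis by auto
qed


lemma main_v:
  fixes v :: "int \<Rightarrow> real" and n :: nat
  assumes n: "n \<ge> 1"
   and P1: "\<And>i. v i \<ge> 0"
   and P2: "\<And>i. \<bar>i\<bar> > 2*int n - 2 \<Longrightarrow> v i = 0"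
   and P3: "\<And>i. v (-i) = v i"
   and P4: "\<And>j. v j = Aop n v j"
   and P5: "(\<Sum>i\<in>{-(2*int n - 2)..2*int n - 2}. v i) = 1"
  shows "0 < v (- 2 * int n + 2) \<and> (\<forall>j. - 2 * int n + 2 \<le> j \<and> j < 0 \<longrightarrow> v j < v (j + 1))
     \<and> v (- int n) = (real n - 1) / (2 * real n - 1) * v 0"
proof -
  define N where "N = int n"
  define c1 where "c1 = 1/(2*real n - 1)"
  define c2 where "c2 = 1/(2*real n)"
  have N1: "N \<ge> 1" using n N_def by simp
  have c1p: "c1 > 0" using n by (simp add: c1_def)
  have c2p: "c2 > 0" using n by (simp add: c2_def)
  have P2': "\<And>i. \<bar>i\<bar> > 2*N - 2 \<Longrightarrow> v i = 0" using P2 N_def by simp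
  have A: "v j = c1 * (\<Sum>t\<in>{-N+1..N-1}. v (2*j+2*t)) + c2 * (\<Sum>t\<in>{-N+1..N}. v (2*j+2*t-1))" for j
    using P4[of j] unfolding Aop_def c1_def c2_def N_def by simp
  have Dg: "v (j+1) - v j = c1 * (v (2*j+2*N) - v (2*j-2*N+2)) + c2 * (v (2*j+2*N+1) - v (2*j-2*N+1))" for j
  proof -
    have e1: "(\<Sum>t\<in>{-N+1..N-1}. v (2*(j+1)+2*t)) - (\<Sum>t\<in>{-N+1..N-1}. v (2*j+2*t)) = v (2*j+2*N) - v (2*j-2*N+2)"
      using tele[of "-N+1" "N-1" "\<lambda>t. v (2*j+2*t)"] N1 by (simp add: algebra_simps)
    have e2: "(\<Sum>t\<in>{-N+1..N}. v (2*(j+1)+2*t-1)) - (\<Sum>t\<in>{-N+1..N}. v (2*j+2*t-1)) = v (2*j+2*N+1) - v (2*j-2*N+1)"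
      using tele[of "-N+1" "N" "\<lambda>t. v (2*j+2*t-1)"] N1 by (simp add: algebra_simps)
    have f1: "c1 * (\<Sum>t\<in>{-N+1..N-1}. v (2*(j+1)+2*t)) - c1 * (\<Sum>t\<in>{-N+1..N-1}. v (2*j+2*t)) = c1 * (v (2*j+2*N) - v (2*j-2*N+2))"
      using e1 by (metis right_diff_distrib)
    have f2: "c2 * (\<Sum>t\<in>{-N+1..N}. v (2*(j+1)+2*t-1)) - c2 * (\<Sum>t\<in>{-N+1..N}. v (2*j+2*t-1)) = c2 * (v (2*j+2*N+1) - v (2*j-2*N+1))"
      using e2 by (metis right_diff_distrib)
    show ?thesis using A[of "j+1"] A[of j] f1 f2 by linarith
  qed
  have Dneg: "v (j+1) - v j = c1 * v (2*j+2*N) + c2 * v (2*j+2*N+1)" if "j \<le> -1" for j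
  proof -
    have "v (2*j-2*N+2) = 0" "v (2*j-2*N+1) = 0" using that N1 by (auto intro!: P2')
    then show ?thesis using Dg[of j] by simp
  qed
  have Dpos: "v (j+1) - v j = - (c1 * v (2*j-2*N+2) + c2 * v (2*j-2*N+1))" if "j \<ge> 0" for j
  proof -
    have "v (2*j+2*N) = 0" "v (2*j+2*N+1) = 0" using that N1 by (auto intro!: P2')
    then show ?thesis using Dg[of j] by simp
  qed
  have step: "v j \<le> v (j+1)" if "j \<le> -1" for j
    using Dneg[OF that] P1[of "2*j+2*N"] P1[of "2*j+2*N+1"] c1p c2p
    by (smt (verit) mult_nonneg_nonneg)
  have monoaux: "\<forall>b. b \<le> 0 \<longrightarrow> v (b - int m) \<le> v b" for m
  proof (induction m)
    case 0 then show ?case by simp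
  next
    case (Suc m)
    show ?case
    proof (intro allI impI)
      fix b :: int assume b: "b \<le> 0"
      have "v (b - int (Suc m)) \<le> v (b - int m)" using step[of "b - int (Suc m)"] b by simp
      then show "v (b - int (Suc m)) \<le> v b" using Suc b by force
    qed
  qed
  have mono: "v a \<le> v b" if "a \<le> b" "b \<le> 0" for a b
    using monoaux[of "nat (b - a)"] that by auto
  have v0: "v 0 > 0"
  proof (rule ccontr)
    assume "\<not> v 0 > 0"
    then have z0: "v 0 = 0" using P1[of 0] by simp
    have "v i = 0" for i
    proof (cases "i \<le> 0")
      case True then show ?thesis using mono[of i 0] z0 P1[of i] by simp
    next
      case False then show ?thesis using mono[of "-i" 0] z0 P1[of i] P3[of i] by simp
    qed
    then show False using P5 by simp
  qed
  have C1: "v (-2*N+2) > 0"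
  proof (rule ccontr)
    assume "\<not> v (-2*N+2) > 0"
    then have "v (-2*N+2) = 0" using P1[of "-2*N+2"] by linarith
    then obtain j where j: "-2*N+2 \<le> j" "j < 0" "v j = 0" "v (j+1) \<noteq> 0"
      using discrete_ivt[of "\<lambda>j. v j = 0" "-2*N+2" 0] v0 N1 by auto
    have vj1: "v (j+1) > 0" using j P1[of "j+1"] by simp
    have posabs: "v i > 0" if "\<bar>i\<bar> < -j" for i
    proof (cases "i \<le> 0")
      case True then show ?thesis using mono[of "j+1" i] that vj1 by simp
    next
      case False then show ?thesis using mono[of "j+1" "-i"] that vj1 P3[of i] by simp
    qed
    have zero: "v i = 0" if "i \<ge> -j" for i
      using mono[of "-i" j] that j P3[of i] P1[of i] by simp
    have vjm: "v (j-1) = 0" using mono[of "j-1" j] j P1[of "j-1"] by simp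
    have "v j - v (j-1) = c1 * v (2*(j-1)+2*N) + c2 * v (2*(j-1)+2*N+1)"
      using Dneg[of "j-1"] j by simp
    then have "0 = c1 * v (2*(j-1)+2*N) + c2 * v (2*(j-1)+2*N+1)" using j vjm by simp
    then have "c2 * v (2*(j-1)+2*N+1) = 0"
      using P1[of "2*(j-1)+2*N"] P1[of "2*(j-1)+2*N+1"] c1p c2p
      by (smt (verit) mult_nonneg_nonneg)
    then have "v (2*j+2*N-1) = 0" using c2p by (simp add: algebra_simps)
    then have "\<not> \<bar>2*j+2*N-1\<bar> < -j" using posabs by force
    then have p: "2*j+2*N-1 \<ge> -j" using j by linarith
    have "v (j+1) - v j = c1 * v (2*j+2*N) + c2 * v (2*j+2*N+1)" using Dneg[of j] j by simp
    moreover have "v (2*j+2*N) = 0" "v (2*j+2*N+1) = 0" using zero p by auto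
    ultimately show False using j vj1 by simp
  qed
  have vpos: "v q > 0" if "\<bar>q\<bar> \<le> 2*N-2" for q
  proof (cases "q \<le> 0")
    case True then show ?thesis using mono[of "-2*N+2" q] that C1 by simp
  next
    case False then show ?thesis using mono[of "-2*N+2" "-q"] that C1 P3[of q] by simp
  qed
  have C2: "v j < v (j+1)" if "-2*N+2 \<le> j" "j < 0" for j
  proof -
    have "v (2*j+2*N) > 0" using that by (intro vpos) auto
    then show ?thesis using Dneg[of j] that P1[of "2*j+2*N+1"] c1p c2p
      by (smt (verit) mult_nonneg_nonneg mult_pos_pos)
  qed
  define X1 where "X1 = (\<Sum>j\<in>{-N..-1}. v (2*j+2*N))"
  define Y1 where "Y1 = (\<Sum>j\<in>{-N..-1}. v (2*j+2*N+1))"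
  define X2 where "X2 = (\<Sum>j\<in>{0..N-1}. v (2*j-2*N+2))"
  define Y2 where "Y2 = (\<Sum>j\<in>{0..N-1}. v (2*j-2*N+1))"
  define SE where "SE = (\<Sum>t\<in>{-N+1..N-1}. v (2*t))"
  define SO where "SO = (\<Sum>t\<in>{-N+1..N}. v (2*t-1))"
  have L: "v 0 - v (-N) = c1 * X1 + c2 * Y1"
  proof -
    have "v 0 - v (-N) = (\<Sum>j\<in>{-N..-1}. v (j+1)) - (\<Sum>j\<in>{-N..-1}. v j)"
      using tele[of "-N" "-1" v] N1 by simp
    also have "\<dots> = (\<Sum>j\<in>{-N..-1}. v (j+1) - v j)" by (simp add: sum_subtractf)
    also have "\<dots> = (\<Sum>j\<in>{-N..-1}. c1 * v (2*j+2*N) + c2 * v (2*j+2*N+1))"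
      by (rule sum.cong) (auto intro: Dneg)
    finally show ?thesis by (simp add: X1_def Y1_def sum.distrib sum_distrib_left)
  qed
  have R: "v N - v 0 = - (c1 * X2 + c2 * Y2)"
  proof -
    have "v N - v 0 = (\<Sum>j\<in>{0..N-1}. v (j+1)) - (\<Sum>j\<in>{0..N-1}. v j)"
      using tele[of 0 "N-1" v] N1 by simp
    also have "\<dots> = (\<Sum>j\<in>{0..N-1}. v (j+1) - v j)" by (simp add: sum_subtractf)
    also have "\<dots> = (\<Sum>j\<in>{0..N-1}. - (c1 * v (2*j-2*N+2) + c2 * v (2*j-2*N+1)))"
      by (rule sum.cong) (auto simp: Dpos)
    finally show ?thesis by (simp add: X2_def Y2_def sum_subtractf sum_distrib_left sum_negf)
  qed
  have X1e: "X1 = (\<Sum>t\<in>{0..N-1}. v (2*t))"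
    unfolding X1_def using sum_shift_int[where g="\<lambda>t. v (2*t)" and a="-N" and b="-1" and k=N] by (simp add: algebra_simps)
  have X2e: "X2 = (\<Sum>t\<in>{-N+1..0}. v (2*t))"
    unfolding X2_def using sum_shift_int[where g="\<lambda>t. v (2*t)" and a=0 and b="N-1" and k="-N+1"] by (simp add: algebra_simps)
  have Y1e: "Y1 = (\<Sum>t\<in>{1..N}. v (2*t-1))"
    unfolding Y1_def using sum_shift_int[where g="\<lambda>t. v (2*t-1)" and a="-N" and b="-1" and k="N+1"] by (simp add: algebra_simps)
  have Y2e: "Y2 = (\<Sum>t\<in>{-N+1..0}. v (2*t-1))"
    unfolding Y2_def using sum_shift_int[where g="\<lambda>t. v (2*t-1)" and a=0 and b="N-1" and k="-N+1"] by (simp add: algebra_simps)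
  have XX: "X1 + X2 = SE + v 0"
  proof -
    have a: "SE = (\<Sum>t\<in>{-N+1..0}. v (2*t)) + (\<Sum>t\<in>{0+1..N-1}. v (2*t))"
      unfolding SE_def using N1 by (intro sum_split_int) auto
    have b: "(\<Sum>t\<in>{0..N-1}. v (2*t)) = (\<Sum>t\<in>{0..0}. v (2*t)) + (\<Sum>t\<in>{0+1..N-1}. v (2*t))"
      using N1 by (intro sum_split_int) auto
    show ?thesis using a b X1e X2e by simp
  qed
  have YY: "Y1 + Y2 = SO"
  proof -
    have a: "SO = (\<Sum>t\<in>{-N+1..0}. v (2*t-1)) + (\<Sum>t\<in>{0+1..N}. v (2*t-1))"
      unfolding SO_def using N1 by (intro sum_split_int) auto
    show ?thesis using a Y1e Y2e by simp
  qed
  have A0: "v 0 = c1 * SE + c2 * SO" using A[of 0] by (simp add: SE_def SO_def)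
  have m1: "c1 * X1 + c1 * X2 = c1 * SE + c1 * v 0" using XX by (metis distrib_left)
  have m2: "c2 * Y1 + c2 * Y2 = c2 * SO" using YY by (metis distrib_left)
  have vN: "v N = v (-N)" using P3[of N] by simp
  have key: "2 * v (-N) = v 0 - c1 * v 0" using L R m1 m2 A0 vN by linarith
  have nn: "2 * real n - 1 \<noteq> 0" using n by simp
  have C3: "v (-N) = (real n - 1) / (2 * real n - 1) * v 0"
    using key nn unfolding c1_def by (simp add: field_simps)
  show ?thesis using C1 C2 C3 unfolding N_def by auto
qed


lemma W_props:
  assumes n: "n \<ge> 1"
  shows "(\<forall>i. W n k i \<ge> 0) \<and> (\<forall>i. \<bar>i\<bar> > 2*int n - 2 \<longrightarrow> W n k i = 0)
    \<and> (\<forall>i. W n k (-i) = W n k i) \<and> (\<Sum>i\<in>{-(2*int n - 2)..2*int n - 2}. W n k i) = 1"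
proof (induction k)
  case 0
  have "(\<Sum>i\<in>{-(2*int n - 2)..2*int n - 2}. delta i) = 1"
    using n by (simp add: delta_def)
  then show ?case using n by (auto simp: W_0 delta_def)
next
  case (Suc k)
  have W: "W n (Suc k) = Aop n (W n k)" by (rule ext) (simp add: W_Suc)
  have s: "(\<Sum>i\<in>{-(2*int n - 2)..2*int n - 2}. Aop n (W n k) i) = 1"
    using Suc n by (intro Aop_sum) auto
  show ?case unfolding W using Suc n s
    by (auto intro!: Aop_nonneg Aop_supp Aop_sym)
qed

lemma W_lim:
  assumes "is_basic_limit_function n phi"
  shows "(\<lambda>k. W n k j) \<longlonglongrightarrow> phi (of_int j)"
proof (rule LIMSEQ_I)
  fix r :: real assume r: "0 < r"
  from assms r obtain K where K: "\<forall>k\<ge>K. \<forall>i. \<bar>subdiv n k delta i - phi (real_of_int i / 2 ^ k)\<bar> \<le> r/2"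
    unfolding is_basic_limit_function_def is_limit_function_def by (meson half_gt_zero)
  show "\<exists>no. \<forall>k\<ge>no. norm (W n k j - phi (of_int j)) < r"
  proof (intro exI allI impI)
    fix k assume "K \<le> k"
    with K have "\<bar>subdiv n k delta (2^k * j) - phi (real_of_int (2^k * j) / 2 ^ k)\<bar> \<le> r/2" by blast
    then show "norm (W n k j - phi (of_int j)) < r" using r by (simp add: W_def)
  qed
qed

theorem lemma3:
  fixes n :: nat and phi :: "real \<Rightarrow> real"
  assumes "n \<ge> 1"
    and "is_basic_limit_function n phi"
  shows "0 < phi (of_int (- 2 * int n + 2))
       \<and> (\<forall>j::int. - 2 * int n + 2 \<le> j \<and> j < 0 \<longrightarrow> phi (of_int j) < phi (of_int (j + 1)))
       \<and> phi (- real n) = (real n - 1) / (2 * real n - 1) * phi 0"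
proof -
  define v where "v j = phi (of_int j)" for j
  have lim: "(\<lambda>k. W n k j) \<longlonglongrightarrow> v j" for j unfolding v_def by (rule W_lim[OF assms(2)])
  note WP = W_props[OF assms(1)]
  have P1: "v i \<ge> 0" for i
    using lim[of i] WP by (intro LIMSEQ_le_const[of _ _ 0]) auto
  have P2: "v i = 0" if "\<bar>i\<bar> > 2*int n - 2" for i
  proof -
    have "(\<lambda>k. W n k i) = (\<lambda>k. 0)" using WP that by auto
    then show ?thesis using lim[of i] LIMSEQ_unique tendsto_const by metis
  qed
  have P3: "v (-i) = v i" for i
  proof -
    have "(\<lambda>k. W n k (-i)) = (\<lambda>k. W n k i)" using WP by auto
    then show ?thesis using lim[of i] lim[of "-i"] LIMSEQ_unique by metis
  qed
  have P4: "v j = Aop n v j" for j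
  proof -
    have "(\<lambda>k. W n (Suc k) j) \<longlonglongrightarrow> v j" using lim[of j] by (rule LIMSEQ_Suc)
    moreover have "(\<lambda>k. W n (Suc k) j) \<longlonglongrightarrow> Aop n v j"
      unfolding W_Suc Aop_def by (intro tendsto_intros lim)
    ultimately show ?thesis using LIMSEQ_unique by blast
  qed
  have P5: "(\<Sum>i\<in>{-(2*int n - 2)..2*int n - 2}. v i) = 1"
  proof -
    have "(\<lambda>k. \<Sum>i\<in>{-(2*int n - 2)..2*int n - 2}. W n k i) \<longlonglongrightarrow> (\<Sum>i\<in>{-(2*int n - 2)..2*int n - 2}. v i)"
      by (intro tendsto_intros lim)
    moreover have "(\<lambda>k. \<Sum>i\<in>{-(2*int n - 2)..2*int n - 2}. W n k i) = (\<lambda>k. 1)" using WP by auto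
    ultimately show ?thesis using LIMSEQ_unique tendsto_const by metis
  qed
  have M: "0 < v (- 2 * int n + 2) \<and> (\<forall>j. - 2 * int n + 2 \<le> j \<and> j < 0 \<longrightarrow> v j < v (j + 1))
     \<and> v (- int n) = (real n - 1) / (2 * real n - 1) * v 0"
    by (rule main_v[OF assms(1) P1 P2 P3 P4 P5])
  then show ?thesis unfolding v_def by simp
qed

end
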